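(* Fix $b\in(0,1/9)$. For $t\in(0,1/9)$ let $\mathcal S_t$ be the system on $\mathbb R$ given by $S_{1,t}(x)=tx$, $S_2(x)=bx$, $S_3(x)=(x+8)/9$, with attractor $K_t$. Then for Lebesgue almost all $t\in(0,1/9)$, $$S_{1,t}(K_t)\cap S_2(K_t)=S_{1,t}S_2(K_t).$$
   Context: The attractor $K_t$ is the unique nonempty compact set with $K_t=S_{1,t}(K_t)\cup S_2(K_t)\cup S_3(K_t)$. *)

theory Defs
  imports "HOL-Analysis.Analysis"
begin

definition S1 :: "real \<Rightarrow> real \<Rightarrow> real" where "S1 t x = t * x"
definition S2 :: "real \<Rightarrow> real \<Rightarrow> real" where "S2 b x = b * x"
definition S3 :: "real \<Rightarrow> real" where "S3 x = (x + 8) / 9"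

definition attractor :: "real \<Rightarrow> real \<Rightarrow> real set" where
  "attractor b t = (THE K. K \<noteq> {} \<and> compact K \<and>
      K = S1 t ` K \<union> S2 b ` K \<union> S3 ` K)"

end

theory Submission
  imports Defs
begin

lemma peel:
  fixes p q x :: real and K :: "real set"
  assumes p: "0 < p" "p < 1" and Ku: "K \<subseteq> {0..1}"
    and pK: "\<And>y. y \<in> K \<Longrightarrow> p * y \<in> K"
    and dec: "\<And>y. y \<in> K \<Longrightarrow> (\<exists>z\<in>K. y = p * z) \<or> (\<exists>z\<in>K. y = q * z) \<or> (\<exists>z\<in>K. y = S3 z)"
    and x: "x = p * y0" "y0 \<in> K" "x \<noteq> 0"
    and nb: "\<And>y. y \<in> K \<Longrightarrow> x \<noteq> p * (q * y)"
  shows "\<exists>n\<ge>1. \<exists>y\<in>K. x = p ^ n * S3 y"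
proof -
  have powK: "p ^ k * y \<in> K" if "y \<in> K" for k y
    using that by (induction k) (auto simp: mult.assoc dest: pK)
  define S where "S = {k. \<exists>w\<in>K. x = p ^ k * w}"
  obtain N where N: "p ^ N < \<bar>x\<bar>" using real_arch_pow_inv[of "\<bar>x\<bar>" p] x p by auto
  have "S \<subseteq> {..<N}"
  proof
    fix k assume "k \<in> S"
    then obtain w where w: "w \<in> K" "x = p ^ k * w" by (auto simp: S_def)
    have "\<bar>x\<bar> = p ^ k * \<bar>w\<bar>" using w p by (simp add: abs_mult)
    also have "\<dots> \<le> p ^ k" using w Ku p by (auto intro: mult_left_le)
    finally have "p ^ N < p ^ k" using N by linarith
    then show "k \<in> {..<N}" using p
      by (metis lessThan_iff not_le power_decreasing less_le_not_le less_imp_le)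
  qed
  then have fin: "finite S" by (rule finite_subset) auto
  have "1 \<in> S" using x by (auto simp: S_def)
  define k where "k = Max S"
  have kS: "k \<in> S" unfolding k_def using fin \<open>1 \<in> S\<close> by (intro Max_in) auto
  have k1: "k \<ge> 1" using fin \<open>1 \<in> S\<close> by (auto simp: k_def)
  have kmax: "j \<in> S \<Longrightarrow> j \<le> k" for j using fin by (auto simp: k_def)
  obtain w where w: "w \<in> K" "x = p ^ k * w" using kS by (auto simp: S_def)
  from dec[OF w(1)] show ?thesis
  proof (elim disjE bexE)
    fix z assume z: "z \<in> K" "w = p * z"
    then have "Suc k \<in> S" using w by (auto simp: S_def mult.assoc)
    then show ?thesis using kmax by fastforce
  next
    fix z assume z: "z \<in> K" "w = q * z"
    have "x = p * (q * (p ^ (k - 1) * z))" using w z k1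
      by (metis (no_types, lifting) mult.assoc mult.left_commute power_eq_if not_one_le_zero)
    then show ?thesis using nb[OF powK[OF z(1)]] by blast
  next
    fix z assume "z \<in> K" "w = S3 z"
    then show ?thesis using w k1 by blast
  qed
qed


context
  fixes b :: real
  assumes b0: "0 < b" and b1: "b < 1/9"
begin

definition FF :: "real \<Rightarrow> real set \<Rightarrow> real set" where
  "FF t A = S1 t ` A \<union> S2 b ` A \<union> S3 ` A"

definition AA :: "real \<Rightarrow> nat \<Rightarrow> real set" where
  "AA t L = (FF t ^^ L) {0..1}"

definition KK :: "real \<Rightarrow> real set" where
  "KK t = (\<Inter>L. AA t L)"

lemma FF_mono: "A \<subseteq> B \<Longrightarrow> FF t A \<subseteq> FF t B"
  unfolding FF_def by blast

lemma FF_unit: assumes "0 < t" "t < 1/9" shows "FF t {0..1} \<subseteq> {0..1}"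
  using assms b0 b1 unfolding FF_def S1_def S2_def S3_def
  by (auto simp: mult_le_one)

lemma AA_Suc: "AA t (Suc L) = FF t (AA t L)"
  by (simp add: AA_def)

lemma AA_dec: assumes "0 < t" "t < 1/9" shows "AA t (Suc L) \<subseteq> AA t L"
proof (induction L)
  case 0 then show ?case using FF_unit[OF assms] by (simp add: AA_def)
next
  case (Suc L) then show ?case by (simp add: AA_Suc FF_mono)
qed

lemma AA_antimono: assumes "0 < t" "t < 1/9" "L \<le> M" shows "AA t M \<subseteq> AA t L"
  using assms(3)
proof (induction M)
  case 0 then show ?case by simp
next
  case (Suc M) then show ?case using AA_dec[OF assms(1,2), of M] by (auto simp: le_Suc_eq)
qed

lemma AA_unit: assumes "0 < t" "t < 1/9" shows "AA t L \<subseteq> {0..1}"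
  using AA_antimono[OF assms, of 0 L] by (simp add: AA_def)

lemma zero_AA: "0 \<in> AA t L"
proof (induction L)
  case 0 then show ?case by (simp add: AA_def)
next
  case (Suc L)
  have "S1 t 0 = 0" by (simp add: S1_def)
  then show ?case using Suc by (simp add: AA_Suc FF_def)
qed

lemma compact_AA: "compact (AA t L)"
proof (induction L)
  case 0 then show ?case by (simp add: AA_def)
next
  case (Suc L)
  have c1: "continuous_on UNIV (S1 t)" "continuous_on UNIV (S2 b)" "continuous_on UNIV S3"
    unfolding S1_def S2_def S3_def by (auto intro!: continuous_intros)
  show ?case unfolding AA_Suc FF_def
    by (intro compact_Un compact_continuous_image Suc continuous_on_subset[OF c1(1)]
        continuous_on_subset[OF c1(2)] continuous_on_subset[OF c1(3)]) auto
qed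

lemma KK_unit: assumes "0 < t" "t < 1/9" shows "KK t \<subseteq> {0..1}"
  using AA_unit[OF assms, of 0] unfolding KK_def by blast

lemma zero_KK: "0 \<in> KK t" unfolding KK_def using zero_AA by blast

lemma compact_KK: assumes "0 < t" "t < 1/9" shows "compact (KK t)"
proof -
  have "closed (KK t)" unfolding KK_def
    by (intro closed_INT) (simp add: compact_AA compact_imp_closed)
  moreover have "bounded (KK t)" using KK_unit[OF assms]
    by (meson bounded_subset compact_Icc compact_imp_bounded)
  ultimately show ?thesis by (simp add: compact_eq_bounded_closed)
qed

lemma FF_KK: assumes "0 < t" "t < 1/9" shows "FF t (KK t) = KK t"
proof
  show "FF t (KK t) \<subseteq> KK t"
  proof -
    have "FF t (KK t) \<subseteq> AA t L" for L
    proof -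
      have "FF t (KK t) \<subseteq> FF t (AA t L)" by (rule FF_mono) (auto simp: KK_def)
      also have "\<dots> \<subseteq> AA t L" using AA_dec[OF assms, of L] by (simp add: AA_Suc)
      finally show ?thesis .
    qed
    then show ?thesis unfolding KK_def by blast
  qed
next
  show "KK t \<subseteq> FF t (KK t)"
  proof
    fix x assume x: "x \<in> KK t"
    have all: "x / t \<in> AA t L \<or> x / b \<in> AA t L \<or> 9 * x - 8 \<in> AA t L" for L
    proof -
      have "x \<in> AA t (Suc L)" using x by (auto simp: KK_def)
      then have "x \<in> FF t (AA t L)" by (simp add: AA_Suc)
      then consider a where "a \<in> AA t L" "x = t * a" | a where "a \<in> AA t L" "x = b * a"
        | a where "a \<in> AA t L" "x = (a + 8) / 9"
        unfolding FF_def S1_def S2_def S3_def by blast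
      then show ?thesis
      proof cases
        case 1 then show ?thesis using assms by auto
      next
        case 2 then show ?thesis using b0 by auto
      next
        case 3 then have "9 * x - 8 = a" by simp
        then show ?thesis using 3(1) by simp
      qed
    qed
    have "(\<forall>L. x / t \<in> AA t L) \<or> (\<forall>L. x / b \<in> AA t L) \<or> (\<forall>L. 9 * x - 8 \<in> AA t L)"
    proof (rule ccontr)
      assume "\<not> ?thesis"
      then obtain L1 L2 L3 where l: "x / t \<notin> AA t L1" "x / b \<notin> AA t L2" "9 * x - 8 \<notin> AA t L3"
        by blast
      define M where "M = max L1 (max L2 L3)"
      have "AA t M \<subseteq> AA t L1" "AA t M \<subseteq> AA t L2" "AA t M \<subseteq> AA t L3"
        by (auto intro!: AA_antimono[OF assms] simp: M_def)
      then show False using all[of M] l by blast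
    qed
    then have "x / t \<in> KK t \<or> x / b \<in> KK t \<or> 9 * x - 8 \<in> KK t" by (auto simp: KK_def)
    moreover have "x = S1 t (x / t)" "x = S2 b (x / b)" "x = S3 (9 * x - 8)"
      using assms b0 by (auto simp: S1_def S2_def S3_def)
    ultimately show "x \<in> FF t (KK t)" unfolding FF_def by (metis UnI1 UnI2 image_eqI)
  qed
qed

lemma inv_unit:
  assumes t: "0 < t" "t < 1/9" and ne: "K \<noteq> {}" and c: "compact K" and eq: "K = FF t K"
  shows "K \<subseteq> {0..1}"
proof -
  obtain M where M: "M \<in> K" "\<And>y. y \<in> K \<Longrightarrow> y \<le> M"
    using compact_attains_sup[OF c ne] by blast
  obtain m where m: "m \<in> K" "\<And>y. y \<in> K \<Longrightarrow> m \<le> y"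
    using compact_attains_inf[OF c ne] by blast
  have "M \<le> 1"
  proof (rule ccontr)
    assume "\<not> M \<le> 1"
    then have M1: "M > 1" by simp
    have "M \<in> FF t K" using M(1) equalityD1[OF eq] by blast
    then consider a where "a \<in> K" "M = t * a" | a where "a \<in> K" "M = b * a"
      | a where "a \<in> K" "M = (a + 8) / 9"
      unfolding FF_def S1_def S2_def S3_def by blast
    then show False
    proof cases
      case 1 then have "a \<le> M" using M by auto
      then have "t * a \<le> t * M" using t by (simp add: mult_left_mono)
      moreover have "t * M < 1 * M" using M1 t by (intro mult_strict_right_mono) auto
      ultimately show False using 1 by linarith
    next
      case 2 then have "a \<le> M" using M by auto
      then have "b * a \<le> b * M" using b0 by (simp add: mult_left_mono)
      moreover have "b * M < 1 * M" using M1 b1 by (intro mult_strict_right_mono) auto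
      ultimately show False using 2 by linarith
    next
      case 3 then have "a \<le> M" using M by auto
      then show False using 3 M1 by simp
    qed
  qed
  moreover have "0 \<le> m"
  proof (rule ccontr)
    assume "\<not> 0 \<le> m"
    then have M1: "m < 0" by simp
    have "m \<in> FF t K" using m(1) equalityD1[OF eq] by blast
    then consider a where "a \<in> K" "m = t * a" | a where "a \<in> K" "m = b * a"
      | a where "a \<in> K" "m = (a + 8) / 9"
      unfolding FF_def S1_def S2_def S3_def by blast
    then show False
    proof cases
      case 1 then have "m \<le> a" using m by auto
      then have "t * m \<le> t * a" using t by (simp add: mult_left_mono)
      moreover have "t * m > 1 * m" using M1 t by (intro mult_strict_right_mono_neg) auto
      ultimately show False using 1 by linarith
    next
      case 2 then have "m \<le> a" using m by auto
      then have "b * m \<le> b * a" using b0 by (simp add: mult_left_mono)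
      moreover have "b * m > 1 * m" using M1 b1 by (intro mult_strict_right_mono_neg) auto
      ultimately show False using 2 by linarith
    next
      case 3 then have "m \<le> a" using m by auto
      then show False using 3 M1 by simp
    qed
  qed
  ultimately show ?thesis
  proof (intro subsetI)
    fix y assume "y \<in> K"
    then have "y \<le> M" "m \<le> y" using M(2) m(2) by auto
    then show "y \<in> {0..1}" using \<open>M \<le> 1\<close> \<open>0 \<le> m\<close> by simp
  qed
qed

lemma inv_sub_AA:
  assumes t: "0 < t" "t < 1/9" and ne: "K \<noteq> {}" and c: "compact K" and eq: "K = FF t K"
  shows "K \<subseteq> AA t L"
proof (induction L)
  case 0 then show ?case using inv_unit[OF assms] by (simp add: AA_def)
next
  case (Suc L)
  have "FF t K \<subseteq> FF t (AA t L)" by (rule FF_mono[OF Suc])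
  then show ?case using equalityD1[OF eq] by (simp add: AA_Suc)
qed

lemma AA_approx:
  assumes t: "0 < t" "t < 1/9" and ne: "K \<noteq> {}" and c: "compact K" and eq: "K = FF t K"
  shows "x \<in> AA t L \<Longrightarrow> \<exists>y\<in>K. \<bar>x - y\<bar> \<le> (1/9)^L"
proof (induction L arbitrary: x)
  case 0
  obtain y where "y \<in> K" using ne by blast
  then have "y \<in> {0..1}" using inv_unit[OF assms] by blast
  moreover have "x \<in> {0..1}" using 0 by (simp add: AA_def)
  ultimately have "\<bar>x - y\<bar> \<le> 1" by auto
  then show ?case using \<open>y \<in> K\<close> by auto
next
  case (Suc L)
  then have "x \<in> FF t (AA t L)" by (simp add: AA_Suc)
  then consider a where "a \<in> AA t L" "x = t * a" | a where "a \<in> AA t L" "x = b * a"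
      | a where "a \<in> AA t L" "x = (a + 8) / 9"
      unfolding FF_def S1_def S2_def S3_def by blast
  then show ?case
  proof cases
    case 1
    then obtain y where y: "y \<in> K" "\<bar>a - y\<bar> \<le> (1/9)^L" using Suc.IH by blast
    have "t * y \<in> FF t K" using y unfolding FF_def S1_def by blast
    then have "t * y \<in> K" using equalityD2[OF eq] by blast
    moreover have "\<bar>x - t * y\<bar> = t * \<bar>a - y\<bar>" using 1 t by (simp add: abs_mult right_diff_distrib[symmetric])
    moreover have "t * \<bar>a - y\<bar> \<le> (1/9) * (1/9)^L" using y t
      by (intro mult_mono) auto
    ultimately show ?thesis by (metis order.trans power_Suc)
  next
    case 2
    then obtain y where y: "y \<in> K" "\<bar>a - y\<bar> \<le> (1/9)^L" using Suc.IH by blast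
    have "b * y \<in> FF t K" using y unfolding FF_def S2_def by blast
    then have "b * y \<in> K" using equalityD2[OF eq] by blast
    moreover have "\<bar>x - b * y\<bar> = b * \<bar>a - y\<bar>" using 2 b0 by (simp add: abs_mult right_diff_distrib[symmetric])
    moreover have "b * \<bar>a - y\<bar> \<le> (1/9) * (1/9)^L" using y b0 b1
      by (intro mult_mono) auto
    ultimately show ?thesis by (metis order.trans power_Suc)
  next
    case 3
    then obtain y where y: "y \<in> K" "\<bar>a - y\<bar> \<le> (1/9)^L" using Suc.IH by blast
    have "(y + 8) / 9 \<in> FF t K" using y unfolding FF_def S3_def by blast
    then have "(y + 8) / 9 \<in> K" using equalityD2[OF eq] by blast
    moreover have "\<bar>x - (y + 8) / 9\<bar> = \<bar>a - y\<bar> / 9" using 3 by (simp add: field_simps)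
    ultimately show ?thesis using y by (intro bexI[of _ "(y+8)/9"]) auto
  qed
qed

lemma attractor_eq: assumes t: "0 < t" "t < 1/9" shows "attractor b t = KK t"
  unfolding attractor_def
proof (rule the_equality)
  show "KK t \<noteq> {} \<and> compact (KK t) \<and> KK t = S1 t ` KK t \<union> S2 b ` KK t \<union> S3 ` KK t"
    using zero_KK compact_KK[OF t] FF_KK[OF t] unfolding FF_def by auto
next
  fix K assume K: "K \<noteq> {} \<and> compact K \<and> K = S1 t ` K \<union> S2 b ` K \<union> S3 ` K"
  then have ne: "K \<noteq> {}" and c: "compact K" and eq: "K = FF t K" by (auto simp: FF_def)
  show "K = KK t"
  proof
    show "K \<subseteq> KK t" using inv_sub_AA[OF t ne c eq] by (auto simp: KK_def)
  next
    show "KK t \<subseteq> K"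
    proof
      fix x assume x: "x \<in> KK t"
      have "\<exists>y\<in>K. dist y x < e" if e: "e > 0" for e
      proof -
        obtain L where L: "(1/9::real)^L < e" using real_arch_pow_inv[OF e, of "1/9"] by auto
        obtain y where "y \<in> K" "\<bar>x - y\<bar> \<le> (1/9)^L"
          using AA_approx[OF t ne c eq, of x L] x by (auto simp: KK_def)
        then show ?thesis using L by (intro bexI[of _ y]) (auto simp: dist_real_def)
      qed
      then show "x \<in> K" using closed_approachable[OF compact_imp_closed[OF c]] by blast
    qed
  qed
qed

fun comp :: "real \<Rightarrow> nat list \<Rightarrow> real \<Rightarrow> real" where
  "comp t [] x = x"
| "comp t (i # w) x = (if i = 0 then S1 t else if i = 1 then S2 b else S3) (comp t w x)"

fun rho :: "real \<Rightarrow> nat list \<Rightarrow> real" where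
  "rho t [] = 1"
| "rho t (i # w) = (if i = 0 then t else if i = 1 then b else 1/9) * rho t w"

lemma comp_aff: "comp t w x = comp t w 0 + rho t w * x"
  by (induction w) (auto simp: S1_def S2_def S3_def algebra_simps)

lemma rho_nn: "0 \<le> t \<Longrightarrow> 0 \<le> rho t w"
  by (induction w) (use b0 in auto)

lemma rho_le: "0 \<le> t \<Longrightarrow> t \<le> 1/9 \<Longrightarrow> rho t w \<le> rho (1/9) w"
proof (induction w)
  case Nil then show ?case by simp
next
  case (Cons i w)
  then have h: "rho t w \<le> rho (1/9) w" "0 \<le> rho t w" using rho_nn by auto
  have r: "(if i = 0 then t else if i = 1 then b else 1/9) \<le> (if i = 0 then 1/9 else if i = 1 then b else (1/9::real))"
    using Cons.prems by auto
  have r0: "0 \<le> (if i = 0 then 1/9 else if i = 1 then b else (1/9::real))" using b0 by auto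
  show ?case using mult_mono[OF r h(1) r0 h(2)] by simp
qed

lemma rho_le1: "0 \<le> t \<Longrightarrow> t \<le> 1/9 \<Longrightarrow> rho t w \<le> 1"
proof (induction w)
  case Nil then show ?case by simp
next
  case (Cons i w)
  then have "rho t w \<le> 1" "0 \<le> rho t w" using rho_nn by auto
  then show ?case using Cons.prems b0 b1 by (auto intro: mult_le_one)
qed

lemma comp_unit: "0 \<le> t \<Longrightarrow> t \<le> 1/9 \<Longrightarrow> x \<in> {0..1} \<Longrightarrow> comp t w x \<in> {0..1}"
proof (induction w)
  case Nil then show ?case by simp
next
  case (Cons i w)
  then have "comp t w x \<in> {0..1}" by auto
  then show ?case using Cons.prems b0 b1 by (auto simp: S1_def S2_def S3_def intro: mult_le_one)
qed

lemma comp_lip: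
  assumes "0 \<le> t1" "t1 \<le> 1/9" "0 \<le> t2" "t2 \<le> 1/9"
  shows "\<bar>comp t2 w 0 - comp t1 w 0\<bar> \<le> 9/8 * \<bar>t2 - t1\<bar>"
proof (induction w)
  case Nil then show ?case by simp
next
  case (Cons i w)
  define c1 where "c1 = comp t1 w 0"
  define c2 where "c2 = comp t2 w 0"
  have IH: "\<bar>c2 - c1\<bar> \<le> 9/8 * \<bar>t2 - t1\<bar>" using Cons.IH by (simp add: c1_def c2_def)
  have c2u: "0 \<le> c2" "c2 \<le> 1" using comp_unit[of t2 0 w] assms by (auto simp: c2_def)
  consider "i = 0" | "i = 1" | "i \<noteq> 0" "i \<noteq> 1" by blast
  then show ?case
  proof cases
    case 1
    have "\<bar>t2 * c2 - t1 * c1\<bar> = \<bar>(t2 - t1) * c2 + t1 * (c2 - c1)\<bar>" by (simp add: algebra_simps)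
    also have "\<dots> \<le> \<bar>t2 - t1\<bar> * c2 + t1 * \<bar>c2 - c1\<bar>"
      using c2u assms by (auto simp: abs_mult intro: order.trans[OF abs_triangle_ineq])
    also have "\<bar>t2 - t1\<bar> * c2 \<le> \<bar>t2 - t1\<bar>" using c2u by (simp add: mult_left_le)
    also have "t1 * \<bar>c2 - c1\<bar> \<le> (1/9) * (9/8 * \<bar>t2 - t1\<bar>)"
      using IH assms by (intro mult_mono) auto
    finally show ?thesis using 1 by (simp add: S1_def c1_def c2_def)
  next
    case 2
    have "\<bar>b * c2 - b * c1\<bar> = b * \<bar>c2 - c1\<bar>" using b0 by (simp add: abs_mult right_diff_distrib[symmetric])
    also have "\<dots> \<le> 1 * (9/8 * \<bar>t2 - t1\<bar>)" using IH b0 b1 by (intro mult_mono) auto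
    finally show ?thesis using 2 by (simp add: S2_def c1_def c2_def)
  next
    case 3
    have e: "(c2 + 8) / 9 - (c1 + 8) / 9 = (c2 - c1) / 9" by (simp add: field_simps)
    have "\<bar>(c2 + 8) / 9 - (c1 + 8) / 9\<bar> = \<bar>c2 - c1\<bar> / 9" unfolding e by (simp add: abs_divide)
    also have "\<dots> \<le> 9/8 * \<bar>t2 - t1\<bar>"
    proof -
      have "\<bar>c2 - c1\<bar> / 9 \<le> \<bar>c2 - c1\<bar>" by simp
      then show ?thesis using IH by linarith
    qed
    finally show ?thesis using 3 by (simp add: S3_def c1_def c2_def)
  qed
qed

definition WW :: "nat \<Rightarrow> nat list set" where
  "WW L = {w. set w \<subseteq> {0,1,2} \<and> length w = L}"

lemma finite_WW: "finite (WW L)" unfolding WW_def by (rule finite_lists_length_eq) simp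

lemma card_WW: "card (WW L) = 3 ^ L" unfolding WW_def
  by (subst card_lists_length_eq) (auto simp: eval_nat_numeral)

lemma sum_WW: "(\<Sum>w\<in>WW L. rho (1/9) w) = (2/9 + b) ^ L"
proof (induction L)
  case 0
  have "WW 0 = {[]}" by (auto simp: WW_def)
  then show ?case by simp
next
  case (Suc L)
  have eq: "WW (Suc L) = (\<lambda>(xs, n). n # xs) ` (WW L \<times> {0,1,2})"
    unfolding WW_def by (rule lists_length_Suc_eq)
  have inj: "inj_on (\<lambda>(xs, n). n # xs) (WW L \<times> {0,1,2})"
    by (auto simp: inj_on_def)
  have "(\<Sum>w\<in>WW (Suc L). rho (1/9) w) = (\<Sum>(xs, n)\<in>WW L \<times> {0,1,2}. rho (1/9) (n # xs))"
    unfolding eq by (subst sum.reindex[OF inj]) (simp add: case_prod_unfold)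
  also have "\<dots> = (\<Sum>xs\<in>WW L. \<Sum>n\<in>{0,1,2}. rho (1/9) (n # xs))"
    by (rule sum.cartesian_product[symmetric])
  also have "\<dots> = (\<Sum>xs\<in>WW L. (2/9 + b) * rho (1/9) xs)"
    by (intro sum.cong) (auto simp: algebra_simps)
  also have "\<dots> = (2/9 + b) ^ Suc L" by (simp add: sum_distrib_left[symmetric] Suc)
  finally show ?case .
qed

definition hh :: "nat \<Rightarrow> nat \<Rightarrow> nat list \<Rightarrow> nat list \<Rightarrow> real \<Rightarrow> real" where
  "hh n m w w' t = t ^ n * S3 (comp t w 0) - b ^ m * S3 (comp t w' 0)"

lemma hh_mono:
  assumes t: "0 < t1" "t1 < t2" "t2 \<le> 1/9" and n: "n = Suc k" and reg: "8 * b ^ m \<le> t1 ^ k"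
  shows "4 * b ^ m * (t2 - t1) \<le> hh n m w w' t2 - hh n m w w' t1"
proof -
  define A1 where "A1 = comp t1 w 0"
  define A2 where "A2 = comp t2 w 0"
  define C1 where "C1 = comp t1 w' 0"
  define C2 where "C2 = comp t2 w' 0"
  define d where "d = t2 - t1"
  define P where "P = t1 ^ k"
  have d0: "d > 0" using t by (simp add: d_def)
  have P0: "P \<ge> 0" using t by (simp add: P_def)
  have A2u: "0 \<le> A2" "A2 \<le> 1" using comp_unit[of t2 0 w] t by (auto simp: A2_def)
  have lA: "\<bar>A2 - A1\<bar> \<le> 9/8 * d" using comp_lip[of t1 t2 w] t by (simp add: A1_def A2_def d_def)
  have lC: "\<bar>C2 - C1\<bar> \<le> 9/8 * d" using comp_lip[of t1 t2 w'] t by (simp add: C1_def C2_def d_def)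
  have bm: "0 \<le> b ^ m" using b0 by simp
  have eq: "hh n m w w' t2 - hh n m w w' t1
      = (t2 ^ n - t1 ^ n) * S3 A2 + t1 ^ n * (S3 A2 - S3 A1) - b ^ m * (S3 C2 - S3 C1)"
    by (simp add: hh_def A1_def A2_def C1_def C2_def algebra_simps)
  have pw: "t2 ^ n - t1 ^ n \<ge> P * d"
  proof -
    have "t1 ^ k \<le> t2 ^ k" using t by (intro power_mono) auto
    then have "t2 * t1 ^ k \<le> t2 * t2 ^ k" using t by (intro mult_left_mono) auto
    then show ?thesis by (simp add: n P_def d_def algebra_simps)
  qed
  have e1: "(t2 ^ n - t1 ^ n) * S3 A2 \<ge> (P * d) * (8/9)"
  proof -
    have "0 \<le> P * d" using P0 d0 by simp
    then show ?thesis using pw A2u by (intro mult_mono) (auto simp: S3_def)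
  qed
  have tn: "t1 ^ n = t1 * P" by (simp add: n P_def)
  have eA: "S3 A2 - S3 A1 = (A2 - A1) / 9" by (simp add: S3_def field_simps)
  have "\<bar>t1 ^ n * (S3 A2 - S3 A1)\<bar> = t1 ^ n * (\<bar>A2 - A1\<bar> / 9)"
    unfolding eA using t by (simp add: abs_mult abs_divide)
  also have "\<dots> \<le> (1/9 * P) * (d / 8)"
  proof -
    have "t1 * P \<le> (1/9) * P" using t P0 by (intro mult_right_mono) auto
    then have "t1 ^ n \<le> 1/9 * P" using tn by simp
    then show ?thesis using lA P0 by (intro mult_mono) auto
  qed
  finally have e2: "t1 ^ n * (S3 A2 - S3 A1) \<ge> - (P * d) / 72" by (simp add: abs_le_iff)
  have eC: "S3 C2 - S3 C1 = (C2 - C1) / 9" by (simp add: S3_def field_simps)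
  have "\<bar>b ^ m * (S3 C2 - S3 C1)\<bar> = b ^ m * (\<bar>C2 - C1\<bar> / 9)"
    unfolding eC using b0 by (simp add: abs_mult abs_divide)
  also have "\<dots> \<le> (P / 8) * (d / 8)"
    using lC reg bm by (intro mult_mono) (auto simp: P_def)
  finally have e3: "b ^ m * (S3 C2 - S3 C1) \<le> (P * d) / 64" by (simp add: abs_le_iff)
  have "4 * b ^ m * d \<le> (P * d) / 2" using reg d0 by (simp add: P_def)
  then have f0: "4 * (b ^ m * d) \<le> (P * d) / 2" by (simp add: mult.assoc)
  have "4 * (b ^ m * d) \<le> hh n m w w' t2 - hh n m w w' t1"
  proof -
    define X where "X = P * d"
    define U where "U = (t2 ^ n - t1 ^ n) * S3 A2"
    define V where "V = t1 ^ n * (S3 A2 - S3 A1)"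
    define W where "W = b ^ m * (S3 C2 - S3 C1)"
    have "X * (8/9) \<le> U" "- X / 72 \<le> V" "W \<le> X / 64"
      using e1 e2 e3 by (simp_all add: X_def U_def V_def W_def)
    moreover have "hh n m w w' t2 - hh n m w w' t1 = U + V - W" using eq by (simp add: U_def V_def W_def)
    moreover have "4 * (b ^ m * d) \<le> X / 2" using f0 by (simp add: X_def)
    moreover have "X \<ge> 0" using P0 d0 by (simp add: X_def)
    ultimately show ?thesis by linarith
  qed
  then show ?thesis by (simp add: d_def mult.assoc)
qed

lemma cover: assumes t: "0 < t" "t < 1/9"
  shows "AA t L \<subseteq> (\<Union>w\<in>WW L. comp t w ` {0..1})"
proof (induction L)
  case 0 then show ?case by (auto simp: AA_def WW_def)
next
  case (Suc L)
  show ?case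
  proof
    fix x assume "x \<in> AA t (Suc L)"
    then have "x \<in> FF t (AA t L)" by (simp add: AA_Suc)
    then consider a where "a \<in> AA t L" "x = S1 t a" | a where "a \<in> AA t L" "x = S2 b a"
      | a where "a \<in> AA t L" "x = S3 a" unfolding FF_def by blast
    then have "\<exists>a i. a \<in> AA t L \<and> i \<in> {0,1,2::nat} \<and>
      x = (if i = 0 then S1 t else if i = 1 then S2 b else S3) a"
    proof cases
      case 1 then show ?thesis by (intro exI[of _ a] exI[of _ "0::nat"]) auto
    next
      case 2 then show ?thesis by (intro exI[of _ a] exI[of _ "1::nat"]) auto
    next
      case 3 then show ?thesis by (intro exI[of _ a] exI[of _ "2::nat"]) auto
    qed
    then obtain a i where a: "a \<in> AA t L" "i \<in> {0,1,2::nat}"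
      "x = (if i = 0 then S1 t else if i = 1 then S2 b else S3) a" by blast
    obtain w s where ws: "w \<in> WW L" "s \<in> {0..1}" "a = comp t w s" using Suc a(1) by blast
    have "i # w \<in> WW (Suc L)" using ws(1) a(2) by (auto simp: WW_def)
    moreover have "x = comp t (i # w) s" using a(3) ws(3) by simp
    ultimately show "x \<in> (\<Union>w\<in>WW (Suc L). comp t w ` {0..1})" using ws(2) by blast
  qed
qed

definition Bad :: "nat \<Rightarrow> nat \<Rightarrow> real set" where
  "Bad n m = {t. 0 < t \<and> t < 1/9 \<and> (\<exists>y\<in>KK t. \<exists>y'\<in>KK t. t ^ n * S3 y = b ^ m * S3 y')}"

lemma KK_props: assumes t: "0 < t" "t < 1/9"
  shows "\<And>y. y \<in> KK t \<Longrightarrow> t * y \<in> KK t" "\<And>y. y \<in> KK t \<Longrightarrow> b * y \<in> KK t"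
    "\<And>y. y \<in> KK t \<Longrightarrow> (\<exists>z\<in>KK t. y = t * z) \<or> (\<exists>z\<in>KK t. y = b * z) \<or> (\<exists>z\<in>KK t. y = S3 z)"
proof -
  have e: "FF t (KK t) = KK t" by (rule FF_KK[OF t])
  fix y assume y: "y \<in> KK t"
  show "t * y \<in> KK t" using y equalityD1[OF e] unfolding FF_def S1_def by blast
  show "b * y \<in> KK t" using y equalityD1[OF e] unfolding FF_def S2_def by blast
  have "y \<in> FF t (KK t)" using y equalityD2[OF e] by blast
  then show "(\<exists>z\<in>KK t. y = t * z) \<or> (\<exists>z\<in>KK t. y = b * z) \<or> (\<exists>z\<in>KK t. y = S3 z)"
    unfolding FF_def S1_def S2_def by blast
qed

lemma good_eq:
  assumes t: "0 < t" "t < 1/9" and good: "\<And>n m. t \<notin> Bad (Suc n) (Suc m)"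
  shows "S1 t ` KK t \<inter> S2 b ` KK t = (S1 t \<circ> S2 b) ` KK t"
proof
  show "(S1 t \<circ> S2 b) ` KK t \<subseteq> S1 t ` KK t \<inter> S2 b ` KK t"
  proof
    fix x assume "x \<in> (S1 t \<circ> S2 b) ` KK t"
    then obtain y where y: "y \<in> KK t" "x = t * (b * y)" by (auto simp: S1_def S2_def)
    have "x \<in> S1 t ` KK t" using y KK_props(2)[OF t y(1)] by (auto simp: S1_def)
    moreover have "x = b * (t * y)" using y by simp
    then have "x \<in> S2 b ` KK t" using KK_props(1)[OF t y(1)] by (auto simp: S2_def)
    ultimately show "x \<in> S1 t ` KK t \<inter> S2 b ` KK t" by blast
  qed
next
  show "S1 t ` KK t \<inter> S2 b ` KK t \<subseteq> (S1 t \<circ> S2 b) ` KK t"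
  proof
    fix x assume x: "x \<in> S1 t ` KK t \<inter> S2 b ` KK t"
    then have "x \<in> S1 t ` KK t" "x \<in> S2 b ` KK t" by auto
    then obtain y1 y2 where "y1 \<in> KK t" "x = S1 t y1" "y2 \<in> KK t" "x = S2 b y2" by blast
    then have y: "y1 \<in> KK t" "x = t * y1" "y2 \<in> KK t" "x = b * y2" by (auto simp: S1_def S2_def)
    show "x \<in> (S1 t \<circ> S2 b) ` KK t"
    proof (rule ccontr)
      assume nx: "x \<notin> (S1 t \<circ> S2 b) ` KK t"
      have nb1: "\<And>y. y \<in> KK t \<Longrightarrow> x \<noteq> t * (b * y)" using nx by (auto simp: S1_def S2_def)
      have nb2: "\<And>y. y \<in> KK t \<Longrightarrow> x \<noteq> b * (t * y)" using nb1 by (metis mult.left_commute)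
      have x0: "x \<noteq> 0" using nb1[OF zero_KK] by simp
      obtain n y where n: "n \<ge> 1" "y \<in> KK t" "x = t ^ n * S3 y"
        using peel[of t "KK t" b x y1, OF t(1) _ KK_unit[OF t] KK_props(1)[OF t] KK_props(3)[OF t]
            y(2) y(1) x0 nb1] t by auto
      have dec2: "\<And>y. y \<in> KK t \<Longrightarrow> (\<exists>z\<in>KK t. y = b * z) \<or> (\<exists>z\<in>KK t. y = t * z) \<or> (\<exists>z\<in>KK t. y = S3 z)"
        using KK_props(3)[OF t] by blast
      obtain m y' where m: "m \<ge> 1" "y' \<in> KK t" "x = b ^ m * S3 y'"
        using peel[of b "KK t" t x y2, OF b0 _ KK_unit[OF t] KK_props(2)[OF t] dec2
            y(4) y(3) x0 nb2] b1 by auto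
      have e: "t ^ n * S3 y = b ^ m * S3 y'" using n(3) m(3) by simp
      have "t \<in> Bad n m" unfolding Bad_def using t e n(2) m(2) by blast
      moreover have "Suc (n - 1) = n" "Suc (m - 1) = m" using n(1) m(1) by auto
      ultimately have "t \<in> Bad (Suc (n - 1)) (Suc (m - 1))" by simp
      then show False using good by blast
    qed
  qed
qed

lemma bad_sub:
  assumes n: "n = Suc k" and tb: "t \<in> Bad n m"
  shows "0 < t \<and> t < 1/9 \<and> 8 * b ^ m \<le> t ^ k \<and>
    (\<exists>w\<in>WW L. \<exists>w'\<in>WW L. \<bar>hh n m w w' t\<bar> \<le> rho (1/9) w + rho (1/9) w')"
proof -
  obtain y y' where t: "0 < t" "t < 1/9" and y: "y \<in> KK t" "y' \<in> KK t"
    and e: "t ^ n * S3 y = b ^ m * S3 y'"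
    using tb unfolding Bad_def by blast
  have yu: "y \<in> {0..1}" "y' \<in> {0..1}" using y KK_unit[OF t] by auto
  have bm: "0 \<le> b ^ m" "b ^ m \<le> 1" using b0 b1 by (auto intro: power_le_one)
  have tn: "0 \<le> t ^ n" "t ^ n \<le> 1" using t by (auto intro: power_le_one)
  have "b ^ m * (8/9) \<le> b ^ m * S3 y'" using yu bm by (intro mult_left_mono) (auto simp: S3_def)
  also have "\<dots> = t ^ n * S3 y" using e by simp
  also have "\<dots> \<le> t ^ n * 1" using yu tn by (intro mult_left_mono) (auto simp: S3_def)
  finally have r1: "b ^ m * (8/9) \<le> t ^ n" by simp
  have "t ^ n = t * t ^ k" by (simp add: n)
  also have "\<dots> \<le> (1/9) * t ^ k" using t by (intro mult_right_mono) auto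
  finally have reg: "8 * b ^ m \<le> t ^ k" using r1 by simp
  have "y \<in> AA t L" "y' \<in> AA t L" using y by (auto simp: KK_def)
  then obtain w s w' s' where ws: "w \<in> WW L" "s \<in> {0..1}" "y = comp t w s"
    "w' \<in> WW L" "s' \<in> {0..1}" "y' = comp t w' s'"
    using cover[OF t, of L] by blast
  define a where "a = comp t w 0"
  define a' where "a' = comp t w' 0"
  define u where "u = rho t w * s"
  define u' where "u' = rho t w' * s'"
  have ya: "y = a + u" "y' = a' + u'" using ws comp_aff unfolding a_def a'_def u_def u'_def by metis+
  have hh_eq: "hh n m w w' t = - (t ^ n * u) / 9 + b ^ m * u' / 9"
  proof -
    have "hh n m w w' t = t ^ n * S3 (y - u) - b ^ m * S3 (y' - u')"
      using ya by (simp add: hh_def a_def a'_def)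
    also have "\<dots> = (t ^ n * S3 y - b ^ m * S3 y') - (t ^ n * u) / 9 + b ^ m * u' / 9"
      by (simp add: S3_def algebra_simps add_divide_distrib diff_divide_distrib)
    finally show ?thesis using e by simp
  qed
  have tt: "0 \<le> t" "t \<le> 1/9" using t by auto
  have u0: "0 \<le> u" "0 \<le> u'" using ws rho_nn[OF tt(1)] by (auto simp: u_def u'_def)
  have "t ^ n * u \<le> 1 * rho (1/9) w"
    unfolding u_def using tn ws rho_nn[OF tt(1), of w] rho_le[OF tt, of w]
    by (intro mult_mono) (auto intro: mult_le_one order.trans[OF mult_right_le_one_le])
  moreover have "b ^ m * u' \<le> 1 * rho (1/9) w'"
    unfolding u'_def using bm ws rho_nn[OF tt(1), of w'] rho_le[OF tt, of w']
    by (intro mult_mono) (auto intro: mult_le_one order.trans[OF mult_right_le_one_le])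
  moreover have "0 \<le> t ^ n * u" "0 \<le> b ^ m * u'" using u0 tn bm by auto
  ultimately have "\<bar>hh n m w w' t\<bar> \<le> rho (1/9) w + rho (1/9) w'"
    unfolding hh_eq by (simp add: abs_le_iff)
  then show ?thesis using t reg ws by blast
qed

lemma neg_bad: "negligible (Bad (Suc k) (Suc j))"
proof -
  define n where "n = Suc k"
  define m where "m = Suc j"
  have bm: "0 < b ^ m" using b0 by simp
  define r where "r = 3 * (2/9 + b)"
  have r: "0 \<le> r" "r < 1" using b0 b1 by (auto simp: r_def)
  show ?thesis unfolding negligible_outer_le n_def[symmetric] m_def[symmetric]
  proof (intro allI impI)
    fix e :: real assume e: "e > 0"
    obtain L where L: "r ^ L < e * b ^ m / 2" using real_arch_pow_inv[of "e * b ^ m / 2" r] e bm r by auto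
    define E where "E w w' = {t. 0 < t \<and> t < 1/9 \<and> 8 * b ^ m \<le> t ^ k \<and>
      \<bar>hh n m w w' t\<bar> \<le> rho (1/9) w + rho (1/9) w'}" for w w'
    define D where "D w w' = (rho (1/9) w + rho (1/9) w') / (2 * b ^ m)" for w w'
    define I where "I w w' = (if E w w' = {} then {} else
        {(SOME t. t \<in> E w w') - D w w' .. (SOME t. t \<in> E w w') + D w w'})" for w w'
    have D0: "0 \<le> D w w'" for w w'
      using rho_nn[of "1/9"] bm unfolding D_def by (auto intro!: divide_nonneg_pos add_nonneg_nonneg)
    have diam: "t2 - t1 \<le> D w w'" if "t1 \<in> E w w'" "t2 \<in> E w w'" for t1 t2 w w'
    proof (cases "t1 < t2")
      case True
      have h: "4 * b ^ m * (t2 - t1) \<le> hh n m w w' t2 - hh n m w w' t1"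
        using hh_mono[of t1 t2 n k m w w'] that True unfolding E_def by (auto simp: n_def)
      have "hh n m w w' t2 - hh n m w w' t1 \<le> 2 * (rho (1/9) w + rho (1/9) w')"
        using that unfolding E_def by (auto simp: abs_le_iff)
      moreover have h': "4 * (b ^ m * (t2 - t1)) \<le> hh n m w w' t2 - hh n m w w' t1"
        using h by (simp add: mult.assoc)
      ultimately have "4 * (b ^ m * (t2 - t1)) \<le> 2 * (rho (1/9) w + rho (1/9) w')" by (rule order.trans[rotated])
      then have "2 * (b ^ m * (t2 - t1)) \<le> rho (1/9) w + rho (1/9) w'" by simp
      then have "(t2 - t1) * (2 * b ^ m) \<le> rho (1/9) w + rho (1/9) w'"
        by (simp add: ac_simps)
      then show ?thesis unfolding D_def using bm by (simp add: pos_le_divide_eq)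
    next
      case False then show ?thesis using D0[of w w'] by simp
    qed
    define T where "T = (\<Union>p\<in>WW L \<times> WW L. I (fst p) (snd p))"
    have Imeas: "I w w' \<in> lmeasurable" for w w' by (simp add: I_def)
    have finP: "finite (WW L \<times> WW L)" using finite_WW by simp
    have Tmeas: "T \<in> lmeasurable" unfolding T_def
      by (rule fmeasurable.finite_UN[OF finP]) (simp add: Imeas)
    have sub: "Bad n m \<subseteq> T"
    proof
      fix t assume "t \<in> Bad n m"
      then obtain w w' where ww: "w \<in> WW L" "w' \<in> WW L" "t \<in> E w w'"
        using bad_sub[OF n_def, of t m L] unfolding E_def by blast
      define c where "c = (SOME t. t \<in> E w w')"
      have c: "c \<in> E w w'" unfolding c_def using ww(3) by (rule someI)
      have "t - c \<le> D w w'" "c - t \<le> D w w'" using diam c ww(3) by blast+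
      then have "t \<in> I w w'" using ww(3) unfolding I_def c_def[symmetric] by auto
      then show "t \<in> T" unfolding T_def using ww by force
    qed
    have mI: "measure lebesgue (I w w') \<le> (rho (1/9) w + rho (1/9) w') / b ^ m" for w w'
    proof (cases "E w w' = {}")
      case True
      then show ?thesis using rho_nn[of "1/9"] bm unfolding I_def by (auto intro!: divide_nonneg_pos add_nonneg_nonneg)
    next
      case False
      then have "measure lebesgue (I w w') = 2 * D w w'" unfolding I_def using D0[of w w'] by simp
      moreover have "2 * D w w' = (rho (1/9) w + rho (1/9) w') / b ^ m"
      proof -
        have "\<And>X Z::real. 2 * (X / (2 * Z)) = X / Z" by simp
        then show ?thesis unfolding D_def by metis
      qed
      ultimately show ?thesis by simp
    qed
    have "measure lebesgue T \<le> (\<Sum>p\<in>WW L \<times> WW L. measure lebesgue (I (fst p) (snd p)))"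
      unfolding T_def by (rule measure_UNION_le[OF finP]) (use Imeas fmeasurableD in blast)
    also have "\<dots> \<le> (\<Sum>p\<in>WW L \<times> WW L. (rho (1/9) (fst p) + rho (1/9) (snd p)) / b ^ m)"
      by (rule sum_mono) (rule mI)
    also have "\<dots> = (\<Sum>w\<in>WW L. \<Sum>w'\<in>WW L. (rho (1/9) w + rho (1/9) w') / b ^ m)"
      by (simp add: sum.cartesian_product')
    also have "\<dots> = (2 * (card (WW L) * (\<Sum>w\<in>WW L. rho (1/9) w))) / b ^ m"
      by (simp add: sum.distrib sum_divide_distrib[symmetric] sum_distrib_left[symmetric])
    also have "\<dots> = 2 * r ^ L / b ^ m"
    proof -
      have rL: "r ^ L = 3 ^ L * (2/9 + b) ^ L" unfolding r_def power_mult_distrib by (rule refl)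
      show ?thesis by (simp add: card_WW sum_WW rL)
    qed
    also have "\<dots> \<le> e" using L bm by (simp add: pos_divide_le_eq)
    finally show "\<exists>T. Bad n m \<subseteq> T \<and> T \<in> lmeasurable \<and> measure lebesgue T \<le> e"
      using sub Tmeas by blast
  qed
qed

end

theorem proposition9:
  fixes b :: real
  assumes "0 < b" and "b < 1/9"
  shows "AE t in lborel. t \<in> {0<..<1/9} \<longrightarrow>
           S1 t ` attractor b t \<inter> S2 b ` attractor b t
             = (S1 t \<circ> S2 b) ` attractor b t"
proof -
  define N where "N = (\<Union>p\<in>(UNIV :: (nat \<times> nat) set). Bad b (Suc (fst p)) (Suc (snd p)))"
  have "negligible N" unfolding N_def
    by (rule negligible_countable_Union) (auto intro: neg_bad[OF assms])
  then have "N \<in> null_sets lebesgue" by (simp add: negligible_iff_null_sets)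
  then have "AE t in lebesgue. t \<notin> N" by (rule AE_not_in)
  then have "AE t in lborel. t \<notin> N" by (simp add: AE_completion_iff)
  then show ?thesis
  proof (rule eventually_mono)
    fix t assume tN: "t \<notin> N"
    show "t \<in> {0<..<1/9} \<longrightarrow> S1 t ` attractor b t \<inter> S2 b ` attractor b t
             = (S1 t \<circ> S2 b) ` attractor b t"
    proof
      assume "t \<in> {0<..<1/9}"
      then have t: "0 < t" "t < 1/9" by auto
      have good: "t \<notin> Bad b (Suc n) (Suc m)" for n m using tN unfolding N_def by force
      show "S1 t ` attractor b t \<inter> S2 b ` attractor b t = (S1 t \<circ> S2 b) ` attractor b t"
        using good_eq[OF assms t good] attractor_eq[OF assms t] by simp
    qed
  qed
qed

end
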